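(* Let $d \ge 1$ and let $\beta=(\beta_1,\ldots,\beta_{d+1})$ be an optimal solution of the problem of minimizing $\beta_1\cdots\beta_d$ over all $(\beta_1,\dots,\beta_{d+1}) \in \mathbb{R}^{d+1}$ satisfying $\beta_1 \ge \cdots \ge \beta_{d+1} \ge 0$, $\beta_1+\cdots+\beta_{d+1}=1$, and, for every $t \in \{1,\dots,d\}$, \[ \mathrm{PS}(t):\quad \prod_{i=1}^t (\beta_i - \beta_{d+1}) \le \sum_{j=t+1}^{d+1} (\beta_j - \beta_{d+1}) + (d+1)\beta_{d+1}. \] Then there exists $\ell \in \{0,\ldots,d\}$ such that (a) $\beta_t = \beta_{t+1}$ for every $t$ with $\ell+1 \le t \le d$, and (b) $\mathrm{PS}(t)$ holds with equality for every $t$ with $1 \le t \le \ell-1$. *)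

theory Defs
  imports Complex_Main
begin

text \<open>Vectors in R^(d+1) are represented as functions nat => real; only the
  values at indices 1..d+1 matter.\<close>

definition PS :: "nat \<Rightarrow> (nat \<Rightarrow> real) \<Rightarrow> nat \<Rightarrow> bool" where
  "PS d \<beta> t \<longleftrightarrow>
     (\<Prod>i=1..t. \<beta> i - \<beta> (d+1))
       \<le> (\<Sum>j=t+1..d+1. \<beta> j - \<beta> (d+1)) + real (d+1) * \<beta> (d+1)"

definition feasible :: "nat \<Rightarrow> (nat \<Rightarrow> real) \<Rightarrow> bool" where
  "feasible d \<beta> \<longleftrightarrow>
     (\<forall>i\<in>{1..d}. \<beta> i \<ge> \<beta> (i+1)) \<and> \<beta> (d+1) \<ge> 0 \<and>
     (\<Sum>i=1..d+1. \<beta> i) = 1 \<and>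
     (\<forall>t\<in>{1..d}. PS d \<beta> t)"

definition optimal :: "nat \<Rightarrow> (nat \<Rightarrow> real) \<Rightarrow> bool" where
  "optimal d \<beta> \<longleftrightarrow> feasible d \<beta> \<and>
     (\<forall>\<gamma>. feasible d \<gamma> \<longrightarrow> (\<Prod>i=1..d. \<beta> i) \<le> (\<Prod>i=1..d. \<gamma> i))"

end

theory Submission
  imports Defs
begin

definition Gf :: "nat \<Rightarrow> (nat \<Rightarrow> real) \<Rightarrow> nat \<Rightarrow> real" where
  "Gf d x s = (\<Prod>i=1..s. x i - x (d+1)) + (\<Sum>i=1..s. x i - x (d+1))"

lemma rhs_eq:
  assumes "(\<Sum>i=1..d+1. x i) = 1" "s \<le> d"
  shows "(\<Sum>j=s+1..d+1. x j - x (d+1)) + real (d+1) * x (d+1) = 1 - (\<Sum>i=1..s. x i - x (d+1))"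
proof -
  have "(\<Sum>i=1..d+1. x i - x(d+1)) = 1 - real(d+1) * x(d+1)"
    using assms(1) by (simp add: sum_subtractf)
  moreover have "(\<Sum>i=1..d+1. x i - x(d+1)) = (\<Sum>i=1..s. x i - x(d+1)) + (\<Sum>i=s+1..d+1. x i - x(d+1))"
    using sum.ub_add_nat[of 1 s "\<lambda>i. x i - x(d+1)" "d+1-s"] assms(2) by simp
  ultimately show ?thesis by linarith
qed

lemma PS_iff:
  assumes "(\<Sum>i=1..d+1. x i) = 1" "s \<le> d"
  shows "PS d x s \<longleftrightarrow> Gf d x s \<le> 1"
  using rhs_eq[OF assms] unfolding PS_def Gf_def by linarith

lemma mono_feas:
  assumes "feasible d \<beta>" "1 \<le> i" "i \<le> j" "j \<le> d+1"
  shows "\<beta> j \<le> \<beta> i"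
  using assms(3,4)
proof (induction j rule: dec_induct)
  case base
  then show ?case by simp
next
  case (step n)
  then have "n \<in> {1..d}" using assms(2) by auto
  then have "\<beta> (n+1) \<le> \<beta> n" using assms(1) by (simp add: feasible_def)
  then show ?case using step by simp
qed

lemma pos_feas:
  assumes "feasible d \<beta>" "1 \<le> d"
  shows "\<beta> d > 0"
proof (rule ccontr)
  assume "\<not> \<beta> d > 0"
  have c0: "\<beta> (d+1) \<ge> 0" using assms(1) by (simp add: feasible_def)
  have ge: "\<And>i. 1 \<le> i \<Longrightarrow> i \<le> d+1 \<Longrightarrow> \<beta> i \<ge> \<beta> (d+1)"
    using mono_feas[OF assms(1)] by simp
  have bd: "\<beta> d = 0" "\<beta> (d+1) = 0" using ge[of d] assms(2) c0 \<open>\<not> \<beta> d > 0\<close> by auto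
  define J where "J = {j\<in>{1..d}. \<beta> j > 0}"
  have "J \<noteq> {}"
  proof
    assume "J = {}"
    have "\<beta> i \<le> 0" if i: "i \<in> {1..d+1}" for i
    proof (cases "i = d+1")
      case True then show ?thesis using bd by simp
    next
      case False
      then have "i \<in> {1..d}" using i by auto
      then show ?thesis using \<open>J = {}\<close> unfolding J_def by auto
    qed
    then have "(\<Sum>i=1..d+1. \<beta> i) \<le> 0" by (rule sum_nonpos)
    then show False using assms(1) by (simp add: feasible_def)
  qed
  define L where "L = Max J"
  have fin: "finite J" by (simp add: J_def)
  have L: "L \<in> J" using Max_in[OF fin \<open>J \<noteq> {}\<close>] by (simp add: L_def)
  have Lmax: "\<And>j. j \<in> J \<Longrightarrow> j \<le> L" using Max_ge[OF fin] by (simp add: L_def)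
  have "PS d \<beta> L" using assms(1) L by (simp add: feasible_def J_def)
  moreover have "(\<Sum>j=L+1..d+1. \<beta> j - \<beta> (d+1)) = 0"
  proof (rule sum.neutral, intro ballI)
    fix j assume j: "j \<in> {L+1..d+1}"
    show "\<beta> j - \<beta> (d+1) = 0"
    proof (cases "j = d+1")
      case True then show ?thesis by simp
    next
      case False
      then have "j \<notin> J" using j Lmax by force
      then have "\<beta> j \<le> 0" using j False by (auto simp: J_def)
      moreover have "\<beta> j \<ge> 0" using ge[of j] j bd L by (auto simp: J_def)
      ultimately show ?thesis using bd by simp
    qed
  qed
  moreover have "(\<Prod>i=1..L. \<beta> i - \<beta> (d+1)) > 0"
  proof (rule prod_pos)
    fix i assume i: "i \<in> {1..L}"
    have "\<beta> L \<le> \<beta> i" using mono_feas[OF assms(1), of i L] i L by (auto simp: J_def)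
    then show "\<beta> i - \<beta> (d+1) > 0" using L bd by (auto simp: J_def)
  qed
  ultimately show False using bd by (simp add: PS_def)
qed

lemma conv_seg:
  fixes g :: "nat \<Rightarrow> real"
  assumes inc: "\<And>i. a \<le> i \<Longrightarrow> i + 2 \<le> b \<Longrightarrow> g (i+1) - g i \<le> g (i+2) - g (i+1)"
    and le: "\<And>s. a \<le> s \<Longrightarrow> s \<le> b \<Longrightarrow> g s \<le> 1"
    and t: "a \<le> t" "t \<le> b" "g t < 1"
    and s: "a < s" "s < b"
  shows "g s < 1"
proof (rule ccontr)
  assume "\<not> g s < 1"
  then have gs: "g s = 1" using le[of s] s by auto
  define D where "D i = g (i+1) - g i" for i
  have Dmono: "D i \<le> D j" if "a \<le> i" "i \<le> j" "j + 1 \<le> b" for i j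
    using that(2,3)
  proof (induction j rule: dec_induct)
    case base then show ?case by simp
  next
    case (step n)
    then have "D n \<le> D (Suc n)" using inc[of n] that(1) by (simp add: D_def)
    then show ?case using step by simp
  qed
  have D1: "D (s-1) \<ge> 0" using gs le[of "s-1"] s by (simp add: D_def)
  have D2: "D s \<le> 0" using gs le[of "s+1"] s by (simp add: D_def)
  have "g t \<ge> g s"
  proof (cases "s \<le> t")
    case True
    have "\<And>k. s \<le> k \<Longrightarrow> k \<le> t \<Longrightarrow> g k \<ge> g s"
    proof -
      fix k assume "s \<le> k" "k \<le> t"
      then show "g k \<ge> g s"
      proof (induction k rule: dec_induct)
        case base then show ?case by simp
      next
        case (step n)
        have "D (s-1) \<le> D n" using Dmono[of "s-1" n] step s t by auto
        then show ?case using step D1 by (simp add: D_def)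
      qed
    qed
    then show ?thesis using True by simp
  next
    case False
    have "\<And>m. m \<le> s - t \<Longrightarrow> g (s - m) \<ge> g s"
    proof -
      fix m assume "m \<le> s - t"
      then show "g (s - m) \<ge> g s"
      proof (induction m)
        case 0 then show ?case by simp
      next
        case (Suc m)
        have "D (s - Suc m) \<le> D s" using Dmono[of "s - Suc m" s] Suc.prems s t by auto
        moreover have "s - Suc m + 1 = s - m" using Suc.prems False by auto
        ultimately have "g (s - Suc m) \<ge> g (s - m)" using D2 by (simp add: D_def)
        then show ?case using Suc by simp
      qed
    qed
    from this[of "s - t"] False show ?thesis by simp
  qed
  then show False using t gs by simp
qed

lemma Gf_conv:
  assumes "\<And>j. r < j \<Longrightarrow> j \<le> m \<Longrightarrow> x j = v"
    and "\<And>j. 1 \<le> j \<Longrightarrow> j \<le> m \<Longrightarrow> x j \<ge> x (d+1)"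
    and "r \<le> i" "i + 2 \<le> m"
  shows "Gf d x (i+1) - Gf d x i \<le> Gf d x (i+2) - Gf d x (i+1)"
proof -
  define c where "c = x (d+1)"
  define A where "A = (\<Prod>j=1..i. x j - c)"
  define S where "S = (\<Sum>j=1..i. x j - c)"
  have A0: "A \<ge> 0" unfolding A_def using assms(2,4) by (intro prod_nonneg) (auto simp: c_def)
  have x1: "x (Suc i) = v" "x (Suc (Suc i)) = v" using assms(1,3,4) by auto
  have G0: "Gf d x i = A + S" by (simp add: Gf_def A_def S_def c_def)
  have G1: "Gf d x (i+1) = (v - c) * A + (v - c) + S"
    by (simp add: Gf_def A_def S_def c_def prod.nat_ivl_Suc' sum.nat_ivl_Suc' x1)
  have G2: "Gf d x (i+2) = (v - c) * ((v - c) * A) + (v - c) + ((v - c) + S)"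
    using x1 by (simp add: Gf_def A_def S_def c_def prod.nat_ivl_Suc' sum.nat_ivl_Suc' numeral_2_eq_2)
  have "0 \<le> A * (v - c - 1)^2" using A0 by simp
  then show ?thesis unfolding G0 G1 G2 by (simp add: power2_eq_square algebra_simps)
qed

lemma ev_lt:
  fixes f :: "real \<Rightarrow> real"
  assumes "isCont f 0" "f 0 < y"
  shows "eventually (\<lambda>e. f e < y) (at_right 0)"
proof -
  have "(f \<longlongrightarrow> f 0) (at_right 0)"
    using continuous_at_imp_continuous_at_within[OF assms(1)] by (simp add: continuous_within)
  then show ?thesis using assms(2) order_tendstoD(2) by blast
qed

lemma prod_split2:
  assumes "finite A" "p \<in> A" "q \<in> A" "p \<noteq> q"
  shows "prod f A = f p * f q * prod f (A - {p,q})"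
proof -
  have "prod f A = f p * prod f (A - {p})" by (rule prod.remove) (use assms in auto)
  also have "prod f (A - {p}) = f q * prod f (A - {p} - {q})" by (rule prod.remove) (use assms in auto)
  also have "A - {p} - {q} = A - {p,q}" by auto
  finally show ?thesis by (simp add: mult.assoc)
qed


lemma key:
  assumes opt: "optimal d \<beta>" and d1: "1 \<le> d" and t1: "1 \<le> t" and td: "t+1 \<le> d"
    and pos: "\<beta> (t+1) > \<beta> (d+1)"
  shows "(\<Prod>i=1..t. \<beta> i - \<beta> (d+1)) = (\<Sum>j=t+1..d+1. \<beta> j - \<beta> (d+1)) + real (d+1) * \<beta> (d+1)"
proof (rule ccontr)
  assume ne: "\<not> ?thesis"
  from opt have feas: "feasible d \<beta>"
    and mn: "\<And>\<gamma>. feasible d \<gamma> \<Longrightarrow> (\<Prod>i=1..d. \<beta> i) \<le> (\<Prod>i=1..d. \<gamma> i)"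
    by (auto simp: optimal_def)
  define c where "c = \<beta> (d+1)"
  have sum1: "(\<Sum>i=1..d+1. \<beta> i) = 1" using feas by (simp add: feasible_def)
  have c0: "0 \<le> c" using feas by (simp add: feasible_def c_def)
  have mono: "\<And>i j. 1 \<le> i \<Longrightarrow> i \<le> j \<Longrightarrow> j \<le> d+1 \<Longrightarrow> \<beta> j \<le> \<beta> i"
    using mono_feas[OF feas] by blast
  have gec: "\<And>i. 1 \<le> i \<Longrightarrow> i \<le> d+1 \<Longrightarrow> \<beta> i \<ge> c" using mono unfolding c_def by simp
  have bpos: "\<And>i. 1 \<le> i \<Longrightarrow> i \<le> d \<Longrightarrow> \<beta> i > 0"
  proof -
    fix i assume "1 \<le> i" "i \<le> d"
    then have "\<beta> d \<le> \<beta> i" using mono[of i d] by simp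
    then show "\<beta> i > 0" using pos_feas[OF feas d1] by simp
  qed
  have Gle: "\<And>s. s \<le> d \<Longrightarrow> Gf d \<beta> s \<le> 1"
  proof -
    fix s assume s: "s \<le> d"
    show "Gf d \<beta> s \<le> 1"
    proof (cases "s = 0")
      case True then show ?thesis by (simp add: Gf_def)
    next
      case False
      then have "PS d \<beta> s" using feas s by (simp add: feasible_def)
      then show ?thesis using PS_iff[OF sum1 s] by simp
    qed
  qed
  have Gt: "Gf d \<beta> t < 1"
  proof -
    have "PS d \<beta> t" using feas t1 td by (simp add: feasible_def)
    then have "Gf d \<beta> t \<le> 1" using PS_iff[OF sum1] td by simp
    moreover have "Gf d \<beta> t \<noteq> 1"
      using ne rhs_eq[OF sum1, of t] td unfolding Gf_def by auto
    ultimately show ?thesis by simp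
  qed
  define p where "p = (LEAST i. 1 \<le> i \<and> \<beta> i = \<beta> t)"
  have p: "1 \<le> p" "\<beta> p = \<beta> t" using LeastI[of "\<lambda>i. 1 \<le> i \<and> \<beta> i = \<beta> t" t] t1 by (auto simp: p_def)
  have pt: "p \<le> t" using Least_le[of "\<lambda>i. 1 \<le> i \<and> \<beta> i = \<beta> t" t] t1 by (auto simp: p_def)
  have pblock: "\<And>i. p \<le> i \<Longrightarrow> i \<le> t \<Longrightarrow> \<beta> i = \<beta> t"
  proof -
    fix i assume "p \<le> i" "i \<le> t"
    then have "\<beta> t \<le> \<beta> i" "\<beta> i \<le> \<beta> p" using mono[of i t] mono[of p i] p td by auto
    then show "\<beta> i = \<beta> t" using p by simp
  qed
  have pstart: "2 \<le> p \<Longrightarrow> \<beta> p < \<beta> (p-1)"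
  proof -
    assume p2: "2 \<le> p"
    have "\<not> (1 \<le> p-1 \<and> \<beta> (p-1) = \<beta> t)"
      using not_less_Least[of "p-1" "\<lambda>i. 1 \<le> i \<and> \<beta> i = \<beta> t"] p2 by (simp add: p_def)
    moreover have "\<beta> p \<le> \<beta> (p-1)" using mono[of "p-1" p] p2 pt td by simp
    ultimately show ?thesis using p p2 by auto
  qed
  define Q where "Q = {j\<in>{t+1..d}. \<beta> j = \<beta> (t+1)}"
  define q where "q = Max Q"
  have finQ: "finite Q" by (simp add: Q_def)
  have tQ: "t+1 \<in> Q" using td by (simp add: Q_def)
  have qQ: "q \<in> Q" using Max_in[OF finQ] tQ by (auto simp: q_def)
  have qmax: "\<And>j. j \<in> Q \<Longrightarrow> j \<le> q" using Max_ge[OF finQ] by (simp add: q_def)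
  have q: "t+1 \<le> q" "q \<le> d" "\<beta> q = \<beta> (t+1)" using qQ by (auto simp: Q_def)
  have qblock: "\<And>j. t+1 \<le> j \<Longrightarrow> j \<le> q \<Longrightarrow> \<beta> j = \<beta> (t+1)"
  proof -
    fix j assume "t+1 \<le> j" "j \<le> q"
    then have "\<beta> q \<le> \<beta> j" "\<beta> j \<le> \<beta> (t+1)" using mono[of j q] mono[of "t+1" j] q by auto
    then show "\<beta> j = \<beta> (t+1)" using q by simp
  qed
  have qend: "\<beta> (q+1) < \<beta> q"
  proof (cases "q = d")
    case True then show ?thesis using q pos by simp
  next
    case False
    then have "q+1 \<notin> Q" using qmax by force
    then have "\<beta> (q+1) \<noteq> \<beta> q" using q False by (auto simp: Q_def)
    moreover have "\<beta> (q+1) \<le> \<beta> q" using mono[of q "q+1"] q t1 by simp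
    ultimately show ?thesis by simp
  qed
  have pq: "p < q" using pt q by simp
  have strict: "\<And>s. p \<le> s \<Longrightarrow> s < q \<Longrightarrow> Gf d \<beta> s < 1"
  proof -
    fix s assume s: "p \<le> s" "s < q"
    consider "s = t" | "s < t" | "t < s" by linarith
    then show "Gf d \<beta> s < 1"
    proof cases
      case 1 then show ?thesis using Gt by simp
    next
      case 2
      show ?thesis
      proof (rule conv_seg[where g="Gf d \<beta>" and a="p-1" and b=t and t=t and s=s])
        fix i assume hi: "p - 1 \<le> i" "i + 2 \<le> t"
        show "Gf d \<beta> (i+1) - Gf d \<beta> i \<le> Gf d \<beta> (i+2) - Gf d \<beta> (i+1)"
        proof (rule Gf_conv[where r="p-1" and m=t and v="\<beta> t" and x=\<beta> and d=d and i=i])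
          fix j assume "p - 1 < j" "j \<le> t" then show "\<beta> j = \<beta> t" by (intro pblock) auto
        next
          fix j assume "1 \<le> j" "j \<le> t" then show "\<beta> j \<ge> \<beta> (d+1)" using gec td unfolding c_def by simp
        qed (use hi in simp_all)
      next
        fix s' assume "p - 1 \<le> s'" "s' \<le> t"
        then show "Gf d \<beta> s' \<le> 1" using Gle td by simp
      qed (use Gt 2 s p in simp_all)
    next
      case 3
      show ?thesis
      proof (rule conv_seg[where g="Gf d \<beta>" and a=t and b=q and t=t and s=s])
        fix i assume hi: "t \<le> i" "i + 2 \<le> q"
        show "Gf d \<beta> (i+1) - Gf d \<beta> i \<le> Gf d \<beta> (i+2) - Gf d \<beta> (i+1)"
        proof (rule Gf_conv[where r=t and m=q and v="\<beta> (t+1)" and x=\<beta> and d=d and i=i])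
          fix j assume "t < j" "j \<le> q" then show "\<beta> j = \<beta> (t+1)" by (intro qblock) auto
        next
          fix j assume "1 \<le> j" "j \<le> q" then show "\<beta> j \<ge> \<beta> (d+1)" using gec q unfolding c_def by simp
        qed (use hi in simp_all)
      next
        fix s' assume "t \<le> s'" "s' \<le> q"
        then show "Gf d \<beta> s' \<le> 1" using Gle q by simp
      qed (use Gt 3 s q in simp_all)
    qed
  qed
  define u :: "nat \<Rightarrow> real" where "u i = (if i = p then 1 else 0) - (if i = q then 1 else 0)" for i
  define \<gamma> where "\<gamma> e i = \<beta> i + e * u i" for e :: real and i
  have up: "u p = 1" "u q = -1" using pq by (auto simp: u_def)
  have u0: "\<And>i. i \<noteq> p \<Longrightarrow> i \<noteq> q \<Longrightarrow> u i = 0" by (simp add: u_def)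
  have \<gamma>d: "\<And>e. \<gamma> e (d+1) = c" using q pq by (auto simp: \<gamma>_def u_def c_def)
  have usum: "\<And>A. finite A \<Longrightarrow> (\<Sum>i\<in>A. u i) = (if p \<in> A then 1 else 0) - (if q \<in> A then 1 else 0)"
    by (simp add: u_def sum_subtractf)
  have sum\<gamma>: "\<And>e. (\<Sum>i=1..d+1. \<gamma> e i) = 1"
  proof -
    fix e
    have "(\<Sum>i=1..d+1. \<gamma> e i) = (\<Sum>i=1..d+1. \<beta> i) + e * (\<Sum>i=1..d+1. u i)"
      unfolding \<gamma>_def sum.distrib sum_distrib_left by (rule refl)
    also have "(\<Sum>i=1..d+1. u i) = 0" using usum[of "{1..d+1}"] p q pq by simp
    finally show "(\<Sum>i=1..d+1. \<gamma> e i) = 1" using sum1 by simp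
  qed
  have G\<gamma>: "\<And>e s. Gf d (\<gamma> e) s = (\<Prod>i=1..s. \<beta> i + e * u i - c) + (\<Sum>i=1..s. \<beta> i + e * u i - c)"
    unfolding Gf_def \<gamma>d by (simp add: \<gamma>_def)
  have G\<beta>: "\<And>s. Gf d \<beta> s = (\<Prod>i=1..s. \<beta> i - c) + (\<Sum>i=1..s. \<beta> i - c)"
    unfolding Gf_def c_def by (rule refl)
  have E1: "\<forall>i\<in>{1..d}. eventually (\<lambda>e. \<gamma> e (i+1) \<le> \<gamma> e i) (at_right 0)"
  proof
    fix i assume i: "i \<in> {1..d}"
    have le: "\<beta> (i+1) \<le> \<beta> i" using mono[of i "i+1"] i by simp
    show "eventually (\<lambda>e. \<gamma> e (i+1) \<le> \<gamma> e i) (at_right 0)"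
    proof (cases "\<beta> (i+1) < \<beta> i")
      case True
      have "eventually (\<lambda>e. (\<lambda>e. \<gamma> e (i+1) - \<gamma> e i) e < 0) (at_right 0)"
      proof (rule ev_lt)
        show "isCont (\<lambda>e. \<gamma> e (i+1) - \<gamma> e i) 0" unfolding \<gamma>_def by (intro continuous_intros)
        show "\<gamma> 0 (i+1) - \<gamma> 0 i < 0" using True by (simp add: \<gamma>_def)
      qed
      then show ?thesis by (rule eventually_mono) simp
    next
      case False
      then have eq: "\<beta> (i+1) = \<beta> i" using le by simp
      have iq: "i \<noteq> q" using qend eq by auto
      have ip: "i+1 \<noteq> p"
      proof
        assume "i+1 = p"
        then have "2 \<le> p" using i by simp
        then have "\<beta> p < \<beta> (p-1)" by (rule pstart)
        moreover have "p - 1 = i" using \<open>i+1 = p\<close> by simp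
        ultimately show False using eq \<open>i+1 = p\<close> by simp
      qed
      have uu: "u (i+1) \<le> u i" using iq ip by (auto simp: u_def)
      show ?thesis
      proof (rule eventually_mono[OF eventually_at_right_less])
        fix e :: real assume "0 < e"
        then have "e * u (i+1) \<le> e * u i" using uu by (simp add: mult_left_mono)
        then show "\<gamma> e (i+1) \<le> \<gamma> e i" using eq by (simp add: \<gamma>_def)
      qed
    qed
  qed
  have E2: "\<forall>s\<in>{1..d}. eventually (\<lambda>e. Gf d (\<gamma> e) s \<le> 1) (at_right 0)"
  proof
    fix s assume s: "s \<in> {1..d}"
    consider "s < p" | "q \<le> s" | "p \<le> s" "s < q" by linarith
    then show "eventually (\<lambda>e. Gf d (\<gamma> e) s \<le> 1) (at_right 0)"
    proof cases
      case 1
      have "\<And>e. Gf d (\<gamma> e) s = Gf d \<beta> s"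
      proof -
        fix e
        have ui: "\<And>i. i \<in> {1..s} \<Longrightarrow> \<beta> i + e * u i - c = \<beta> i - c" using u0 1 pq by auto
        show "Gf d (\<gamma> e) s = Gf d \<beta> s"
        proof -
          have h1: "(\<Prod>i=1..s. \<beta> i + e * u i - c) = (\<Prod>i=1..s. \<beta> i - c)"
            by (rule prod.cong[OF refl]) (rule ui)
          have h2: "(\<Sum>i=1..s. \<beta> i + e * u i - c) = (\<Sum>i=1..s. \<beta> i - c)"
            by (rule sum.cong[OF refl]) (rule ui)
          show ?thesis unfolding G\<gamma> G\<beta> h1 h2 by (rule refl)
        qed
      qed
      then show ?thesis using Gle s by (intro always_eventually) simp
    next
      case 2
      show ?thesis
      proof (rule eventually_mono[OF eventually_at_right_less])
        fix e :: real assume e: "0 < e"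
        define A where "A = {1..s}"
        have fA: "finite A" and pA: "p \<in> A" and qA: "q \<in> A" using p pq 2 s by (auto simp: A_def)
        have S: "(\<Sum>i\<in>A. \<beta> i + e * u i - c) = (\<Sum>i\<in>A. \<beta> i - c)"
        proof -
          have "(\<Sum>i\<in>A. \<beta> i + e * u i - c) = (\<Sum>i\<in>A. \<beta> i - c) + e * (\<Sum>i\<in>A. u i)"
            by (simp add: sum_distrib_left sum.distrib[symmetric] algebra_simps)
          then show ?thesis using usum[OF fA] pA qA by simp
        qed
        have R: "(\<Prod>i\<in>A-{p,q}. \<beta> i + e * u i - c) = (\<Prod>i\<in>A-{p,q}. \<beta> i - c)"
          by (rule prod.cong) (auto simp: u0)
        have R0: "(\<Prod>i\<in>A-{p,q}. \<beta> i - c) \<ge> 0"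
          by (rule prod_nonneg) (use gec s in \<open>auto simp: A_def\<close>)
        have P1: "(\<Prod>i\<in>A. \<beta> i + e * u i - c) = (\<beta> p + e - c) * (\<beta> q - e - c) * (\<Prod>i\<in>A-{p,q}. \<beta> i - c)"
          using prod_split2[OF fA pA qA, of "\<lambda>i. \<beta> i + e * u i - c"] pq R up by simp
        have P2: "(\<Prod>i\<in>A. \<beta> i - c) = (\<beta> p - c) * (\<beta> q - c) * (\<Prod>i\<in>A-{p,q}. \<beta> i - c)"
          using prod_split2[OF fA pA qA, of "\<lambda>i. \<beta> i - c"] pq by simp
        have bpq: "\<beta> q \<le> \<beta> p" using mono[of p q] p q pq by simp
        have "(\<beta> p + e - c) * (\<beta> q - e - c) \<le> (\<beta> p - c) * (\<beta> q - c)"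
        proof -
          have "(\<beta> p + e - c) * (\<beta> q - e - c) = (\<beta> p - c) * (\<beta> q - c) - e * (\<beta> p - \<beta> q) - e * e"
            by (simp add: algebra_simps)
          moreover have "0 \<le> e * (\<beta> p - \<beta> q)" using e bpq by simp
          moreover have "0 \<le> e * e" by simp
          ultimately show ?thesis by linarith
        qed
        then have "(\<Prod>i\<in>A. \<beta> i + e * u i - c) \<le> (\<Prod>i\<in>A. \<beta> i - c)"
          unfolding P1 P2 using R0 by (rule mult_right_mono)
        then have "Gf d (\<gamma> e) s \<le> Gf d \<beta> s"
          unfolding G\<gamma> G\<beta> using S by (simp add: A_def)
        then show "Gf d (\<gamma> e) s \<le> 1" using Gle[of s] s by simp
      qed
    next
      case 3
      have fe: "(\<lambda>e. Gf d (\<gamma> e) s) = (\<lambda>e. (\<Prod>i=1..s. \<beta> i + e * u i - c) + (\<Sum>i=1..s. \<beta> i + e * u i - c))"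
        using G\<gamma> by auto
      have "eventually (\<lambda>e. (\<lambda>e. Gf d (\<gamma> e) s) e < 1) (at_right 0)"
      proof (rule ev_lt)
        show "isCont (\<lambda>e. Gf d (\<gamma> e) s) 0" unfolding fe by (intro continuous_intros)
        show "Gf d (\<gamma> 0) s < 1" using strict[OF 3] by (simp add: G\<gamma> G\<beta>)
      qed
      then show ?thesis by (rule eventually_mono) simp
    qed
  qed
  have E3: "\<And>e. 0 < e \<Longrightarrow> (\<Prod>i=1..d. \<gamma> e i) < (\<Prod>i=1..d. \<beta> i)"
  proof -
    fix e :: real assume e: "0 < e"
    define A where "A = {1..d}"
    have fA: "finite A" and pA: "p \<in> A" and qA: "q \<in> A" using p pq q by (auto simp: A_def)
    have R: "(\<Prod>i\<in>A-{p,q}. \<gamma> e i) = (\<Prod>i\<in>A-{p,q}. \<beta> i)"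
      by (rule prod.cong) (auto simp: u0 \<gamma>_def)
    have R0: "(\<Prod>i\<in>A-{p,q}. \<beta> i) > 0"
      by (rule prod_pos) (use bpos in \<open>auto simp: A_def\<close>)
    have P1: "(\<Prod>i\<in>A. \<gamma> e i) = (\<beta> p + e) * (\<beta> q - e) * (\<Prod>i\<in>A-{p,q}. \<beta> i)"
      using prod_split2[OF fA pA qA, of "\<gamma> e"] pq R up by (simp add: \<gamma>_def)
    have P2: "(\<Prod>i\<in>A. \<beta> i) = \<beta> p * \<beta> q * (\<Prod>i\<in>A-{p,q}. \<beta> i)"
      using prod_split2[OF fA pA qA, of "\<beta>"] pq by simp
    have bpq: "\<beta> q \<le> \<beta> p" using mono[of p q] p q pq by simp
    have "(\<beta> p + e) * (\<beta> q - e) < \<beta> p * \<beta> q"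
    proof -
      have "(\<beta> p + e) * (\<beta> q - e) = \<beta> p * \<beta> q - e * (\<beta> p - \<beta> q) - e * e"
        by (simp add: algebra_simps)
      moreover have "0 \<le> e * (\<beta> p - \<beta> q)" using e bpq by simp
      moreover have "0 < e * e" using e by simp
      ultimately show ?thesis by linarith
    qed
    then show "(\<Prod>i=1..d. \<gamma> e i) < (\<Prod>i=1..d. \<beta> i)"
      using P1 P2 R0 unfolding A_def by (simp add: mult_strict_right_mono)
  qed
  have "eventually (\<lambda>e. 0 < e \<and> (\<forall>i\<in>{1..d}. \<gamma> e (i+1) \<le> \<gamma> e i) \<and> (\<forall>s\<in>{1..d}. Gf d (\<gamma> e) s \<le> 1)) (at_right 0)"
    using eventually_at_right_less eventually_ball_finite[OF _ E1] eventually_ball_finite[OF _ E2]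
    by (simp add: eventually_conj_iff)
  then obtain e where e: "0 < e" "\<forall>i\<in>{1..d}. \<gamma> e (i+1) \<le> \<gamma> e i" "\<forall>s\<in>{1..d}. Gf d (\<gamma> e) s \<le> 1"
    using eventually_happens'[OF trivial_limit_at_right_real] by blast
  have "feasible d (\<gamma> e)"
    unfolding feasible_def using e sum\<gamma>[of e] \<gamma>d[of e] c0 PS_iff[OF sum\<gamma>[of e]] by auto
  then have "(\<Prod>i=1..d. \<beta> i) \<le> (\<Prod>i=1..d. \<gamma> e i)" by (rule mn)
  then show False using E3[OF e(1)] by simp
qed

theorem lemma3p1:
  fixes d :: nat and \<beta> :: "nat \<Rightarrow> real"
  assumes "d \<ge> 1" and "optimal d \<beta>"
  shows "\<exists>l\<in>{0..d}.
           (\<forall>t. l+1 \<le> t \<and> t \<le> d \<longrightarrow> \<beta> t = \<beta> (t+1)) \<and>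
           (\<forall>t. 1 \<le> t \<and> t+1 \<le> l \<longrightarrow>
              (\<Prod>i=1..t. \<beta> i - \<beta> (d+1))
                = (\<Sum>j=t+1..d+1. \<beta> j - \<beta> (d+1)) + real (d+1) * \<beta> (d+1))"
proof -
  have feas: "feasible d \<beta>" using assms(2) by (simp add: optimal_def)
  have mono: "\<And>i j. 1 \<le> i \<Longrightarrow> i \<le> j \<Longrightarrow> j \<le> d+1 \<Longrightarrow> \<beta> j \<le> \<beta> i"
    using mono_feas[OF feas] by blast
  define J where "J = {j\<in>{1..d}. \<beta> j > \<beta> (d+1)}"
  define L where "L = (if J = {} then 0 else Max J)"
  have fin: "finite J" by (simp add: J_def)
  have Lmax: "\<And>j. j \<in> J \<Longrightarrow> j \<le> L" using Max_ge[OF fin] by (auto simp: L_def)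
  have LJ: "L \<noteq> 0 \<Longrightarrow> L \<in> J" using Max_in[OF fin] by (auto simp: L_def split: if_splits)
  have Ld: "L \<in> {0..d}" using LJ by (cases "L = 0") (auto simp: J_def)
  show ?thesis
  proof (intro bexI[OF _ Ld] conjI allI impI)
    fix t assume t: "L+1 \<le> t \<and> t \<le> d"
    then have "t \<notin> J" using Lmax by force
    then have "\<beta> t \<le> \<beta> (d+1)" using t by (auto simp: J_def)
    moreover have "\<beta> (d+1) \<le> \<beta> (t+1)" "\<beta> (t+1) \<le> \<beta> t"
      using mono[of "t+1" "d+1"] mono[of t "t+1"] t by auto
    ultimately show "\<beta> t = \<beta> (t+1)" by simp
  next
    fix t assume t: "1 \<le> t \<and> t+1 \<le> L"
    then have "L \<in> J" using LJ by simp
    then have "\<beta> L > \<beta> (d+1)" "L \<le> d" by (auto simp: J_def)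
    moreover have "\<beta> L \<le> \<beta> (t+1)" using mono[of "t+1" L] t \<open>L \<le> d\<close> by simp
    ultimately show "(\<Prod>i=1..t. \<beta> i - \<beta> (d+1))
                = (\<Sum>j=t+1..d+1. \<beta> j - \<beta> (d+1)) + real (d+1) * \<beta> (d+1)"
      using key[OF assms(2) assms(1)] t by simp
  qed
qed

end
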